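(* Let $q$ be a prime power and let $n_1,n_2$ be odd positive integers, each coprime to $q$. If every irreducible monic factor of $x^{n_1}-1$ and every irreducible monic factor of $x^{n_2}-1$ in $\mathbb{F}_{q^2}[x]$ is SCRIM, then every irreducible monic factor of $x^{n_1n_2}-1$ in $\mathbb{F}_{q^2}[x]$ is SCRIM.
   Context: $\mathbb{F}_{q^2}$ is the finite field with $q^2$ elements. For $\alpha\in\mathbb{F}_{q^2}$ put $\bar\alpha=\alpha^q$, and for $f(x)=\sum_i f_ix^i$ put $\overline{f(x)}=\sum_i \bar f_i x^i$. For $f(x)$ with $f(0)\neq 0$, $f^*(x)=x^{\deg f}f(0)^{-1}f(1/x)$ and $f^\dagger(x)=\overline{f^*(x)}$. A polynomial is SCRIM if it is monic, irreducible over $\mathbb{F}_{q^2}$, has nonzero constant term, and satisfies $f=f^\dagger$. *)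

theory Defs
  imports "HOL-Computational_Algebra.Computational_Algebra"
begin

text \<open>Conjugation on F_{q^2}: alpha maps to alpha^q, extended coefficientwise to polynomials.\<close>
definition conj_poly :: "nat \<Rightarrow> 'a::field poly \<Rightarrow> 'a poly" where
  "conj_poly q f = map_poly (\<lambda>c. c ^ q) f"

text \<open>f^*(x) = x^(deg f) f(0)^(-1) f(1/x); reflect_poly f is x^(deg f) f(1/x).\<close>
definition recip_poly :: "'a::field poly \<Rightarrow> 'a poly" where
  "recip_poly f = smult (inverse (coeff f 0)) (reflect_poly f)"

definition dagger_poly :: "nat \<Rightarrow> 'a::field poly \<Rightarrow> 'a poly" where
  "dagger_poly q f = conj_poly q (recip_poly f)"

definition SCRIM :: "nat \<Rightarrow> 'a::field poly \<Rightarrow> bool" where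
  "SCRIM q f \<longleftrightarrow> lead_coeff f = 1 \<and> irreducible f \<and> coeff f 0 \<noteq> 0 \<and> f = dagger_poly q f"

end

theory Submission
  imports Defs "HOL-Algebra.Algebraic_Closure_Type" "HOL-Number_Theory.Number_Theory"
begin

hide_const (open) UnivPoly.monom Polynomials.lead_coeff Polynomials.degree up_ring.coeff
  Divisibility.irreducible Divisibility.prime module.smult


lemma odd_pow_plus1_dvd:
  fixes x b :: nat assumes "odd b" shows "x + 1 dvd x ^ b + 1"
proof -
  have "[int x = -1] (mod int x + 1)" by (simp add: cong_iff_dvd_diff)
  hence "[int x ^ b = (-1) ^ b] (mod int x + 1)" by (rule cong_pow)
  moreover have "(-1::int) ^ b = -1" using assms by simp
  ultimately have "[int x ^ b = -1] (mod int x + 1)" by simp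
  hence "[int x ^ b + 1 = -1 + 1] (mod int x + 1)" by (intro cong_add cong_refl)
  hence "[int x ^ b + 1 = 0] (mod int x + 1)" by simp
  hence "int x + 1 dvd int x ^ b + 1" by (simp add: cong_0_iff)
  hence "int (x + 1) dvd int (x ^ b + 1)" by (simp only: of_nat_add of_nat_1 of_nat_power)
  thus ?thesis by (simp only: int_dvd_int_iff)
qed

lemma lte_odd:
  fixes u g :: nat assumes "odd g" "g dvd u + 1" shows "g^2 dvd u ^ g + 1"
proof -
  define U where "U = int u"
  define S where "S = (\<Sum>i<g. (-1::int) ^ (g - Suc i) * U ^ i)"
  have eq: "U ^ g - (-1) ^ g = (U - (-1)) * S"
    unfolding S_def by (rule power_diff_sumr2)
  have c: "[U = -1] (mod int g)" using assms(2) unfolding U_def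
    by (metis cong_iff_dvd_diff diff_minus_eq_add int_dvd_int_iff of_nat_1 of_nat_add)
  have "[S = (\<Sum>i<g. (1::int))] (mod int g)"
    unfolding S_def
  proof (rule cong_sum)
    fix i assume i: "i \<in> {..<g}"
    have "[(-1::int) ^ (g - Suc i) * U ^ i = (-1) ^ (g - Suc i) * (-1) ^ i] (mod int g)"
      by (intro cong_mult cong_refl cong_pow c)
    also have "(-1::int) ^ (g - Suc i) * (-1) ^ i = (-1) ^ (g - Suc i + i)" by (simp add: power_add)
    also have "g - Suc i + i = g - 1" using i by auto
    also have "(-1::int) ^ (g - 1) = 1" using assms(1) by (simp add: odd_pos)
    finally show "[(-1::int) ^ (g - Suc i) * U ^ i = 1] (mod int g)" .
  qed
  hence "int g dvd S" by (simp add: cong_def dvd_eq_mod_eq_0)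
  moreover have "int g dvd U + 1" using assms(2) unfolding U_def
    by (metis int_dvd_int_iff of_nat_1 of_nat_add)
  ultimately have "int g * int g dvd (U + 1) * S" by (simp add: mult_dvd_mono)
  also have "(U + 1) * S = U ^ g + 1" using eq assms(1) by simp
  finally have "int (g^2) dvd int (u ^ g + 1)" unfolding U_def by (simp add: power2_eq_square add.commute)
  thus ?thesis by (simp only: int_dvd_int_iff)
qed

lemma combine:
  fixes q n1 n2 a b :: nat
  assumes "odd n1" "odd n2" "odd a" "odd b" "n1 dvd q^a + 1" "n2 dvd q^b + 1"
  shows "\<exists>E. odd E \<and> n1 * n2 dvd q^E + 1"
proof -
  define g where "g = lcm n1 n2"
  have "q^a + 1 dvd (q^a)^b + 1" using assms(4) by (rule odd_pow_plus1_dvd)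
  hence d1: "n1 dvd q^(a*b) + 1" using assms(5) by (simp add: power_mult dvd_trans)
  have "q^b + 1 dvd (q^b)^a + 1" using assms(3) by (rule odd_pow_plus1_dvd)
  hence d2: "n2 dvd q^(a*b) + 1" using assms(6)
    by (metis dvd_trans mult.commute power_mult)
  have gd: "g dvd q^(a*b) + 1" unfolding g_def using d1 d2 by (rule lcm_least)
  have go: "odd g" unfolding g_def using assms(1,2)
  proof -
    have "lcm n1 n2 dvd n1 * n2" by (intro lcm_least) auto
    moreover have "odd (n1 * n2)" using assms(1,2) by simp
    ultimately show "odd (lcm n1 n2)" by (meson dvd_trans)
  qed
  have "g^2 dvd (q^(a*b))^g + 1" using go gd by (rule lte_odd)
  moreover have "n1 * n2 dvd g^2"
  proof -
    have "n1 * n2 = gcd n1 n2 * lcm n1 n2" by (rule prod_gcd_lcm_nat)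
    moreover have "gcd n1 n2 dvd lcm n1 n2" by (rule dvd_trans[OF gcd_dvd1 dvd_lcm1])
    ultimately show ?thesis unfolding g_def power2_eq_square by (metis mult_dvd_mono dvd_refl)
  qed
  ultimately have "n1 * n2 dvd (q^(a*b))^g + 1" by (rule dvd_trans[rotated])
  hence "n1 * n2 dvd q^(a*b*g) + 1" by (simp only: power_mult)
  moreover have "odd (a*b*g)" using assms(3,4) go by simp
  ultimately show ?thesis by blast
qed


abbreviation P :: "'a::field poly \<Rightarrow> 'a alg_closure poly" where
  "P f \<equiv> map_poly to_ac f"

lemma P_mult: "P (f * g) = P f * P g"
  by (rule poly_eqI) (simp add: coeff_map_poly coeff_mult to_ac_sum)

lemma P_add: "P (f + g) = P f + P g"
  by (rule poly_eqI) (simp add: coeff_map_poly)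

lemma P_diff: "P (f - g) = P f - P g"
  by (rule poly_eqI) (simp add: coeff_map_poly)

lemma P_1: "P 1 = 1" by simp

lemma P_monom: "P (monom c n) = monom (to_ac c) n"
  by (simp add: map_poly_monom)

lemma P_smult: "P (smult c f) = smult (to_ac c) (P f)"
  by (rule poly_eqI) (simp add: coeff_map_poly)

lemma P_dvd: "f dvd g \<Longrightarrow> P f dvd P g"
  by (metis P_mult dvd_def)

lemma dvd_root: "p dvd r \<Longrightarrow> poly p x = 0 \<Longrightarrow> poly r x = 0"
  by (erule dvdE) simp

lemma P_degree [simp]: "degree (P f) = degree f"
  by (rule degree_map_poly) simp

lemma P_eq_iff: "P f = P g \<longleftrightarrow> f = g"
  by (metis P_diff diff_eq_diff_eq diff_self map_poly_eq_0_iff to_ac_eq_0_iff)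

lemma finite_field_pow_card:
  fixes x :: "'a::{field,finite}"
  shows "x ^ card (UNIV :: 'a set) = x"
proof (cases "x = 0")
  case False
  have "x * (\<Prod>y\<in>UNIV-{0}. x * y) = x * x ^ (card (UNIV :: 'a set) - 1) * \<Prod>(UNIV-{0})"
    by (simp add: prod.distrib mult_ac)
  also have "x * x ^ (card (UNIV :: 'a set) - 1) = x ^ Suc (card (UNIV :: 'a set) - 1)"
    by (subst power_Suc) auto
  also have "Suc (card (UNIV :: 'a set) - 1) = card (UNIV :: 'a set)"
    using finite_UNIV_card_ge_0[where ?'a = 'a] by simp
  also have "(\<Prod>y\<in>UNIV-{0}. x * y) = (\<Prod>y\<in>UNIV-{0}. y)"
    by (rule prod.reindex_bij_witness[of _ "\<lambda>y. y / x" "\<lambda>y. x * y"]) (use False in auto)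
  finally show ?thesis
    by simp
qed (use finite_UNIV_card_ge_0[where ?'a = 'a] in auto)

lemma char_prime_finite: "prime CHAR('a::{field,finite})"
  using prime_CHAR_semidom finite_imp_CHAR_pos[OF finite_UNIV] by blast

lemma frob_sum:
  fixes f :: "'b \<Rightarrow> 'a::{field,finite} alg_closure"
  assumes "m = CHAR('a) ^ j"
  shows "sum f A ^ m = sum (\<lambda>i. f i ^ m) A"
  by (rule freshmans_dream_sum') (use assms char_prime_finite in auto)

lemma frob_add:
  fixes x y :: "'a::{field,finite} alg_closure"
  assumes "m = CHAR('a) ^ j"
  shows "(x + y) ^ m = x ^ m + y ^ m"
  by (rule freshmans_dream') (use assms char_prime_finite in auto)

lemma frob_poly:
  fixes g :: "'a::{field,finite} poly"
  assumes "m = CHAR('a) ^ j"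
  shows "poly (P (map_poly (\<lambda>c. c ^ m) g)) (y ^ m) = (poly (P g) y) ^ m"
proof -
  have m0: "m > 0" using assms char_prime_finite[where 'a='a] by (simp add: prime_gt_0_nat)
  have deg: "degree (map_poly (\<lambda>c. c ^ m) g) = degree g"
    by (rule degree_map_poly) simp
  have "poly (P (map_poly (\<lambda>c. c ^ m) g)) (y ^ m) =
        (\<Sum>i\<le>degree g. to_ac (coeff g i) ^ m * (y ^ i) ^ m)"
    by (simp add: poly_altdef deg coeff_map_poly m0 power_mult[symmetric] mult.commute)
  also have "\<dots> = (\<Sum>i\<le>degree g. (to_ac (coeff g i) * y ^ i)) ^ m"
    by (subst frob_sum[OF assms]) (simp add: power_mult_distrib)
  also have "\<dots> = (poly (P g) y) ^ m"
    by (simp add: poly_altdef coeff_map_poly)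
  finally show ?thesis .
qed


lemma minpoly_exists:
  fixes p :: "'a::field poly"
  assumes "p \<noteq> 0" "poly (P p) a = 0"
  shows "\<exists>m. lead_coeff m = 1 \<and> irreducible m \<and> poly (P m) a = 0 \<and>
              (\<forall>g. poly (P g) a = 0 \<longrightarrow> m dvd g)"
proof -
  define S where "S = {n. \<exists>m::'a poly. m \<noteq> 0 \<and> degree m = n \<and> poly (P m) a = 0}"
  have "degree p \<in> S" using assms unfolding S_def by blast
  hence "Least (\<lambda>n. n \<in> S) \<in> S" by (rule LeastI)
  then obtain m0 :: "'a poly" where m0: "m0 \<noteq> 0" "poly (P m0) a = 0"
    and dm0: "degree m0 = Least (\<lambda>n. n \<in> S)" unfolding S_def by blast
  have minim: "degree m0 \<le> degree g" if "g \<noteq> 0" "poly (P g) a = 0" for g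
    unfolding dm0 by (rule Least_le) (use that in \<open>auto simp: S_def\<close>)
  define m where "m = smult (inverse (lead_coeff m0)) m0"
  have m_nz: "m \<noteq> 0" and lm: "lead_coeff m = 1" using m0 unfolding m_def by auto
  have dm: "degree m = degree m0" unfolding m_def using m0 by simp
  have rm: "poly (P m) a = 0" unfolding m_def using m0 by (simp add: P_smult)
  have dvd: "m dvd g" if "poly (P g) a = 0" for g
  proof -
    have "g = m * (g div m) + g mod m" by simp
    hence "P g = P m * P (g div m) + P (g mod m)" by (metis P_add P_mult)
    hence r: "poly (P (g mod m)) a = 0" using that rm by simp
    show ?thesis
    proof (rule ccontr)
      assume "\<not> m dvd g"
      hence "g mod m \<noteq> 0" by (simp add: mod_eq_0_iff_dvd)
      hence "degree (g mod m) < degree m" using m_nz by (simp add: degree_mod_less')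
      moreover have "degree m0 \<le> degree (g mod m)" using minim[OF \<open>g mod m \<noteq> 0\<close> r] .
      ultimately show False using dm by simp
    qed
  qed
  have nu: "\<not> is_unit m"
  proof
    assume "is_unit m"
    hence "degree m = 0" using m_nz by (simp add: is_unit_iff_degree)
    then obtain c where "m = [:c:]" by (meson degree_eq_zeroE)
    thus False using rm lm by (auto simp flip: one_pCons)
  qed
  have irr: "irreducible m"
  proof (rule Factorial_Ring.irreducibleI)
    fix x y assume xy: "m = x * y"
    show "is_unit x \<or> is_unit y"
    proof (rule ccontr)
      assume "\<not> (is_unit x \<or> is_unit y)"
      hence nux: "\<not> is_unit x" and nuy: "\<not> is_unit y" by auto
      have x0: "x \<noteq> 0" and y0: "y \<noteq> 0" using xy m_nz by auto
      have "degree x > 0" using nux x0 by (simp add: is_unit_iff_degree)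
      moreover have "degree y > 0" using nuy y0 by (simp add: is_unit_iff_degree)
      moreover have "degree m = degree x + degree y" using xy x0 y0 by (simp add: degree_mult_eq)
      moreover have "poly (P x) a = 0 \<or> poly (P y) a = 0" using rm xy by (simp add: P_mult)
      ultimately show False using minim[OF x0] minim[OF y0] dm by auto
    qed
  qed (use m_nz nu in auto)
  show ?thesis using lm irr rm dvd by blast
qed

lemma root_dvd:
  fixes h g :: "'a::field poly"
  assumes "irreducible h" "poly (P h) a = 0" "poly (P g) a = 0"
  shows "h dvd g"
proof -
  have h0: "h \<noteq> 0" using assms(1) by auto
  obtain m where m: "lead_coeff m = 1" "irreducible m" "poly (P m) a = 0"
    "\<And>g. poly (P g) a = 0 \<Longrightarrow> m dvd g"
    using minpoly_exists[OF h0 assms(2)] by blast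
  obtain u where u: "h = m * u" using m(4)[OF assms(2)] by blast
  have "\<not> is_unit m" using m(2) by (rule irreducible_not_unit)
  hence "is_unit u" using Factorial_Ring.irreducibleD[OF assms(1) u] by auto
  thus ?thesis using u m(4)[OF assms(3)] by (simp add: mult_unit_dvd_iff)
qed

lemma P_reflect: "P (reflect_poly f) = reflect_poly (P f)"
  by (rule poly_eqI) (simp add: coeff_reflect_poly coeff_map_poly)

lemma dagger_root:
  fixes f :: "'a::{field,finite} poly"
  assumes "q = CHAR('a) ^ j" "poly (P f) y = 0" "y \<noteq> 0" "coeff f 0 \<noteq> 0"
  shows "poly (P (dagger_poly q f)) (inverse y ^ q) = 0"
proof -
  have "poly (P (dagger_poly q f)) (inverse y ^ q) = (poly (P (recip_poly f)) (inverse y)) ^ q"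
    unfolding dagger_poly_def conj_poly_def by (rule frob_poly[OF assms(1)])
  also have "poly (P (recip_poly f)) (inverse y) = 0"
    using assms(2,3) unfolding recip_poly_def
    by (simp add: P_smult P_reflect poly_reflect_poly_nz)
  finally show ?thesis using assms(1) char_prime_finite[where 'a='a]
    by (simp add: prime_gt_0_nat)
qed

lemma dagger_monic:
  fixes f :: "'a::field poly"
  assumes "lead_coeff f = 1" "coeff f 0 \<noteq> 0" "q > 0"
  shows "lead_coeff (dagger_poly q f) = 1 \<and> degree (dagger_poly q f) = degree f"
proof -
  have d1: "degree (recip_poly f) = degree f" using assms(2)
    unfolding recip_poly_def by simp
  have l1: "lead_coeff (recip_poly f) = 1" using assms(2)
    unfolding recip_poly_def by (simp add: coeff_reflect_poly)
  have d2: "degree (dagger_poly q f) = degree (recip_poly f)"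
    unfolding dagger_poly_def conj_poly_def by (rule degree_map_poly) simp
  have "lead_coeff (dagger_poly q f) = (lead_coeff (recip_poly f)) ^ q"
    using d2 unfolding dagger_poly_def conj_poly_def
    using assms(3) by (simp add: coeff_map_poly)
  thus ?thesis using d1 d2 l1 by simp
qed

lemma monic_dvd_eq:
  fixes f g :: "'a::field poly"
  assumes "lead_coeff f = 1" "lead_coeff g = 1" "degree f = degree g" "f dvd g"
  shows "f = g"
proof -
  obtain h where h: "g = f * h" using assms(4) by blast
  have g0: "g \<noteq> 0" using assms(2) by auto
  hence "h \<noteq> 0" "f \<noteq> 0" using h by auto
  hence "degree g = degree f + degree h" using h by (simp add: degree_mult_eq)
  hence "degree h = 0" using assms(3) by simp
  then obtain c where c: "h = [:c:]" by (meson degree_eq_zeroE)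
  have "lead_coeff g = lead_coeff f * lead_coeff h" using h by (simp add: lead_coeff_mult)
  hence "c = 1" using assms(1,2) c by simp
  thus ?thesis using h c by simp
qed


lemma frob_inj:
  fixes x y :: "'a::{field,finite} alg_closure"
  assumes "m = CHAR('a) ^ j" "x ^ m = y ^ m"
  shows "x = y"
proof -
  have "x ^ m = ((x - y) + y) ^ m" by simp
  also have "\<dots> = (x - y) ^ m + y ^ m" by (rule frob_add[OF assms(1)])
  finally have "(x - y) ^ m = 0" using assms(2) by simp
  thus ?thesis by simp
qed

lemma frob_neg:
  fixes x :: "'a::{field,finite} alg_closure"
  assumes "m = CHAR('a) ^ j"
  shows "(- x) ^ m = - (x ^ m)"
proof -
  have m0: "m > 0" using assms char_prime_finite[where 'a='a] by (simp add: prime_gt_0_nat)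
  have "0 = (x + (- x)) ^ m" using m0 by simp
  also have "\<dots> = x ^ m + (- x) ^ m" by (rule frob_add[OF assms])
  finally show ?thesis by (simp add: eq_neg_iff_add_eq_0 add.commute)
qed

lemma map_frob_mult:
  fixes f g :: "'a::{field,finite} alg_closure poly"
  assumes "m = CHAR('a) ^ j"
  shows "map_poly (\<lambda>x. x ^ m) (f * g) = map_poly (\<lambda>x. x ^ m) f * map_poly (\<lambda>x. x ^ m) g"
proof -
  have m0: "m > 0" using assms char_prime_finite[where 'a='a] by (simp add: prime_gt_0_nat)
  show ?thesis
    by (rule poly_eqI) (simp add: coeff_map_poly coeff_mult m0 frob_sum[OF assms] power_mult_distrib)
qed

lemma map_frob_prod:
  fixes F :: "'b \<Rightarrow> 'a::{field,finite} alg_closure poly"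
  assumes "m = CHAR('a) ^ j"
  shows "map_poly (\<lambda>x. x ^ m) (\<Prod>i\<in>A. F i) = (\<Prod>i\<in>A. map_poly (\<lambda>x. x ^ m) (F i))"
proof (induction A rule: infinite_finite_induct)
  case (insert a A)
  thus ?case by (simp add: map_frob_mult[OF assms])
qed simp_all

lemma range_fix:
  fixes y :: "'a::{field,finite} alg_closure"
  assumes "card (UNIV :: 'a set) = Q" "y ^ Q = y"
  shows "y \<in> range to_ac"
proof -
  define p :: "'a alg_closure poly" where "p = monom 1 Q - [:0, 1:]"
  have Q2: "Q \<ge> 2"
  proof -
    have "{0, 1::'a} \<subseteq> UNIV" by simp
    hence "card {0, 1::'a} \<le> card (UNIV :: 'a set)" by (rule card_mono[OF finite_UNIV])
    thus ?thesis using assms(1) by simp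
  qed
  have cQ: "coeff p Q = 1" using Q2 unfolding p_def by (auto simp: coeff_pCons split: nat.split)
  hence p0: "p \<noteq> 0" by auto
  have dp: "degree p \<le> Q" unfolding p_def using Q2
    by (intro degree_le) (auto simp: coeff_monom coeff_pCons split: nat.split)
  have R: "{x. poly p x = 0} = {x. x ^ Q = x}" unfolding p_def by (auto simp: poly_monom)
  have fin: "finite {x. x ^ Q = (x::'a alg_closure)}" using poly_roots_finite[OF p0] R by simp
  have cardR: "card {x. x ^ Q = (x :: 'a alg_closure)} \<le> Q"
    using card_poly_roots_bound[OF p0] dp R by simp
  have sub: "range to_ac \<subseteq> {x. x ^ Q = (x :: 'a alg_closure)}"
    using finite_field_pow_card assms(1) by (auto simp flip: to_ac_power)
  have "card (range (to_ac :: 'a \<Rightarrow> _)) = Q"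
    using assms(1) by (simp add: card_image inj_to_ac)
  hence "range to_ac = {x. x ^ Q = (x :: 'a alg_closure)}"
    using card_subset_eq[OF fin sub] cardR by (metis card_mono[OF fin sub] le_antisym)
  thus ?thesis using assms(2) by auto
qed


lemma orbit:
  fixes f :: "'a::{field,finite} poly" and \<zeta> \<beta> :: "'a alg_closure"
  assumes card: "card (UNIV :: 'a set) = Q" and Qc: "Q = CHAR('a) ^ j"
    and irr: "irreducible f" and rz: "poly (P f) \<zeta> = 0"
    and s: "s > 0" "\<zeta> ^ (Q ^ s) = \<zeta>" and rb: "poly (P f) \<beta> = 0"
  shows "\<exists>i. \<beta> = \<zeta> ^ (Q ^ i)"
proof -
  define Orb where "Orb = (\<lambda>i. \<zeta> ^ (Q ^ i)) ` {..<s}"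
  define \<phi> where "\<phi> = (\<lambda>x::'a alg_closure. x ^ Q)"
  define g where "g = (\<Prod>w\<in>Orb. [:-w, 1:])"
  have finOrb: "finite Orb" unfolding Orb_def by simp
  have Q0: "Q > 0" using Qc char_prime_finite[where 'a='a] by (simp add: prime_gt_0_nat)
  have zOrb: "\<zeta> \<in> Orb" unfolding Orb_def using s(1) by (auto intro!: image_eqI[of _ _ 0])
  have sub: "\<phi> ` Orb \<subseteq> Orb"
  proof
    fix x assume "x \<in> \<phi> ` Orb"
    then obtain i where i: "i < s" "x = (\<zeta> ^ (Q ^ i)) ^ Q" unfolding Orb_def \<phi>_def by auto
    hence x: "x = \<zeta> ^ (Q ^ Suc i)" by (simp add: power_mult[symmetric] mult.commute)
    show "x \<in> Orb"
    proof (cases "Suc i < s")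
      case True thus ?thesis using x unfolding Orb_def by (intro image_eqI[of _ _ "Suc i"]) auto
    next
      case False
      hence "Suc i = s" using i by simp
      hence "x = \<zeta>" using x s(2) by simp
      thus ?thesis using zOrb by simp
    qed
  qed
  have inj: "inj_on \<phi> Orb" unfolding \<phi>_def by (auto intro!: inj_onI frob_inj[OF Qc])
  have img: "\<phi> ` Orb = Orb"
    by (rule card_subset_eq[OF finOrb sub]) (simp add: card_image[OF inj])
  have "map_poly \<phi> g = (\<Prod>w\<in>Orb. map_poly \<phi> [:-w, 1:])"
    unfolding g_def \<phi>_def by (rule map_frob_prod[OF Qc])
  also have "\<dots> = (\<Prod>w\<in>Orb. [:-(\<phi> w), 1:])"
    by (intro prod.cong refl) (simp add: \<phi>_def Q0 frob_neg[OF Qc] map_poly_pCons)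
  also have "\<dots> = (\<Prod>w\<in>\<phi> ` Orb. [:-w, 1:])"
    by (rule prod.reindex[OF inj, symmetric, unfolded comp_def])
  also have "\<dots> = g" unfolding g_def img ..
  finally have gfix: "map_poly \<phi> g = g" .
  have cfix: "coeff g i \<in> range to_ac" for i
  proof -
    have "coeff (map_poly \<phi> g) i = \<phi> (coeff g i)"
      by (rule coeff_map_poly) (simp add: \<phi>_def Q0)
    hence "(coeff g i) ^ Q = coeff g i" using gfix unfolding \<phi>_def by simp
    thus ?thesis by (rule range_fix[OF card])
  qed
  define g0 where "g0 = map_poly of_ac g"
  have Pg0: "P g0 = g"
  proof (rule poly_eqI)
    fix i
    show "coeff (P g0) i = coeff g i"
      unfolding g0_def using cfix[of i] by (simp add: coeff_map_poly to_ac_of_ac)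
  qed
  have "poly g \<zeta> = 0" unfolding g_def using finOrb zOrb by (simp add: poly_prod prod_zero_iff)
  hence "f dvd g0" using root_dvd[OF irr rz] Pg0 by simp
  hence "P f dvd g" using P_dvd Pg0 by metis
  hence "poly g \<beta> = 0" using rb by (rule dvd_root)
  hence "\<beta> \<in> Orb" unfolding g_def using finOrb by (simp add: poly_prod prod_zero_iff)
  thus ?thesis unfolding Orb_def by auto
qed


lemma pow_cong:
  fixes z :: "'b::comm_monoid_mult"
  assumes "z ^ n = 1" "[a = b] (mod n)"
  shows "z ^ a = z ^ b"
proof -
  have "z ^ a = z ^ (n * (a div n) + a mod n)" by simp
  also have "\<dots> = z ^ (a mod n)" by (simp only: power_add power_mult assms(1)) simp
  also have "a mod n = b mod n" using assms(2) by (simp add: cong_def)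
  also have "z ^ (b mod n) = z ^ (n * (b div n) + b mod n)" by (simp only: power_add power_mult assms(1)) simp
  also have "\<dots> = z ^ b" by simp
  finally show ?thesis .
qed

lemma count_roots:
  fixes n :: nat
  assumes n0: "n > 0" and nd: "\<not> CHAR('a::{field,finite}) dvd n"
  shows "n \<le> card {z :: 'a alg_closure. z ^ n = 1}"
proof -
  define p :: "'a alg_closure poly" where "p = monom 1 n - 1"
  have cn: "coeff p n = 1" using n0 unfolding p_def by simp
  hence p0: "p \<noteq> 0" by auto
  have dp: "degree p = n"
    unfolding p_def using n0 by (metis cn degree_1 degree_diff_le degree_monom_eq le_antisym le_degree one_neq_zero max_0R p_def zero_less_iff_neq_zero degree_diff_le_max)
  obtain A where A: "size A = degree p" "p = smult (lead_coeff p) (\<Prod>x\<in>#A. [:-x, 1:])"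
    using alg_closed_imp_factorization[OF p0] by blast
  have lp: "lead_coeff p = 1" using cn dp by simp
  have rootA: "x ^ n = 1" if xA: "x \<in># A" for x
  proof -
    obtain B where "A = add_mset x B" using multi_member_split[OF xA] by blast
    hence "poly p x = 0" using A(2) lp by (simp add: poly_prod_mset)
    thus ?thesis unfolding p_def by (simp add: poly_monom)
  qed
  have cnt: "count A x \<le> 1" for x
  proof (rule ccontr)
    assume "\<not> count A x \<le> 1"
    hence "count A x > 0" by linarith
    hence "x \<in># A" by (simp only: count_greater_zero_iff)
    then obtain B where B: "A = add_mset x B" using multi_member_split[OF \<open>x \<in># A\<close>] by blast
    have "count B x > 0" using B \<open>\<not> count A x \<le> 1\<close> by simp
    hence "x \<in># B" by (simp only: count_greater_zero_iff)
    then obtain C where C: "B = add_mset x C" using multi_member_split[OF \<open>x \<in># B\<close>] by blast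
    define r where "r = (\<Prod>x\<in>#C. [:-x, 1::'a alg_closure:])"
    have pe: "p = [:-x, 1:] * ([:-x, 1:] * r)" using A(2) lp B C unfolding r_def by simp
    have "pderiv p = [:-x, 1:] * pderiv ([:-x, 1:] * r) + ([:-x, 1:] * r) * pderiv [:-x, 1:]"
      unfolding pe by (rule pderiv_mult)
    hence "poly (pderiv p) x = 0" by simp
    moreover have "pderiv p = monom (of_nat n) (n - 1)"
      unfolding p_def by (simp add: pderiv_diff pderiv_monom)
    ultimately have "of_nat n * x ^ (n - 1) = (0 :: 'a alg_closure)" by (simp add: poly_monom)
    moreover have "x \<noteq> 0" using rootA[OF \<open>x \<in># A\<close>] n0 by (auto simp: zero_power)
    moreover have "of_nat n \<noteq> (0 :: 'a alg_closure)"
      using nd by (simp add: of_nat_eq_0_iff_char_dvd)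
    ultimately show False by simp
  qed
  have c1: "count A x = 1" if "x \<in># A" for x
  proof -
    have "count A x > 0" using that by simp
    thus ?thesis using cnt[of x] by linarith
  qed
  have "size A = (\<Sum>x\<in>set_mset A. count A x)" by (rule size_multiset_overloaded_eq)
  also have "\<dots> = (\<Sum>x\<in>set_mset A. 1)" by (rule sum.cong) (simp_all add: c1)
  also have "\<dots> = card (set_mset A)" by simp
  finally have "size A = card (set_mset A)" .
  hence "n = card (set_mset A)" using A(1) dp by simp
  moreover have "set_mset A \<subseteq> {z. z ^ n = 1}" using rootA by auto
  moreover have "finite {z :: 'a alg_closure. z ^ n = 1}"
    using poly_roots_finite[OF p0] unfolding p_def by (simp add: poly_monom)
  ultimately show ?thesis by (metis card_mono)
qed


lemma root_closure:
  fixes f :: "'a::{field,finite} poly"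
  assumes "card (UNIV :: 'a set) = Q" "Q = CHAR('a) ^ j" "poly (P f) z = 0"
  shows "poly (P f) (z ^ (Q ^ t)) = 0"
proof -
  have pw: "c ^ (Q ^ t) = c" for c :: 'a
    by (induction t) (simp_all add: power_mult finite_field_pow_card assms(1)[symmetric] mult.commute)
  have Qt0: "Q ^ t > 0" using assms(2) char_prime_finite[where 'a='a] by (simp add: prime_gt_0_nat)
  have m: "map_poly (\<lambda>c. c ^ (Q ^ t)) f = f"
    by (rule poly_eqI) (simp add: coeff_map_poly Qt0 pw)
  have "Q ^ t = CHAR('a) ^ (j * t)" using assms(2) by (simp add: power_mult)
  from frob_poly[OF this, of f z] show ?thesis using m assms(3) Qt0 by simp
qed

lemma roots_unity_frob:
  fixes z :: "'b::comm_monoid_mult"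
  assumes "z ^ n = 1" "coprime n q"
  shows "z ^ ((q^2) ^ totient n) = z"
proof -
  have "[q ^ totient n = 1] (mod n)" using euler_theorem[of q n] assms(2) by (metis coprime_commute)
  hence "[(q ^ totient n)^2 = 1^2] (mod n)" by (rule cong_pow)
  hence "[(q^2) ^ totient n = 1] (mod n)" by (simp add: power_mult[symmetric] mult.commute)
  hence "z ^ ((q^2) ^ totient n) = z ^ 1" by (rule pow_cong[OF assms(1)])
  thus ?thesis by simp
qed

lemma oddpow:
  fixes z :: "'b::field"
  assumes "z ^ (q ^ e) = inverse z"
  shows "z ^ (q ^ (e * m)) = (if even m then z else inverse z)"
proof (induction m)
  case (Suc m)
  have "z ^ (q ^ (e * Suc m)) = (z ^ (q ^ (e * m))) ^ (q ^ e)"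
    by (simp add: power_add power_mult[symmetric] mult.commute)
  also have "\<dots> = (if even (Suc m) then z else inverse z)"
    using Suc.IH assms by (simp add: power_inverse)
  finally show ?case .
qed simp

lemma hard_direction:
  fixes q n :: nat
  assumes card: "card (UNIV :: 'a::{field,finite} set) = q ^ 2"
    and qc: "q = CHAR('a) ^ k" and k0: "k > 0"
    and n0: "n > 0" and cop: "coprime n q"
    and h: "\<forall>f :: 'a poly. lead_coeff f = 1 \<and> irreducible f \<and> f dvd (monom 1 n - 1) \<longrightarrow> SCRIM q f"
  shows "\<exists>E. odd E \<and> n dvd q ^ E + 1"
proof -
  define Z where "Z = {z :: 'a alg_closure. z ^ n = 1}"
  define s where "s = totient n"
  have s0: "s > 0" using n0 unfolding s_def by simp
  have Qc: "q^2 = CHAR('a) ^ (2 * k)" using qc by (simp add: power_mult[symmetric] mult.commute)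
  have nd: "\<not> CHAR('a) dvd n"
  proof
    assume "CHAR('a) dvd n"
    moreover have "CHAR('a) dvd q" using qc k0 by simp
    ultimately have "CHAR('a) dvd gcd n q" by simp
    thus False using cop char_prime_finite[where 'a='a] by simp
  qed
  define p :: "'a poly" where "p = monom 1 n - 1"
  have "coeff p n = 1" unfolding p_def using n0 by simp
  hence p0: "p \<noteq> 0" by auto
  have Pp: "P p = monom 1 n - 1" unfolding p_def by (simp add: P_diff P_monom)
  have step1: "\<exists>e. odd e \<and> z ^ (q ^ e) = inverse z" if zZ: "z \<in> Z" for z
  proof -
    have zn: "z ^ n = 1" using zZ unfolding Z_def by simp
    have z0: "z \<noteq> 0" using zn n0 by (auto simp: zero_power)
    have "poly (P p) z = 0" using zn Pp by (simp add: poly_monom)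
    then obtain m where m: "lead_coeff m = 1" "irreducible m" "poly (P m) z = 0"
      "\<And>g. poly (P g) z = 0 \<Longrightarrow> m dvd g"
      using minpoly_exists[OF p0] by blast
    have "SCRIM q m" using h m(1,2) m(4)[OF \<open>poly (P p) z = 0\<close>] unfolding p_def by blast
    hence c0: "coeff m 0 \<noteq> 0" and md: "m = dagger_poly q m" unfolding SCRIM_def by auto
    have "poly (P (dagger_poly q m)) (inverse z ^ q) = 0"
      by (rule dagger_root[OF qc m(3) z0 c0])
    hence r: "poly (P m) (inverse z ^ q) = 0" using md by simp
    have zs: "z ^ ((q^2) ^ s) = z" unfolding s_def by (rule roots_unity_frob[OF zn cop])
    obtain i where i: "inverse z ^ q = z ^ ((q^2) ^ i)"
      using orbit[OF card Qc m(2) m(3) s0 zs r] by blast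
    have "z ^ (q ^ (2*i + (2*s - 1))) = (z ^ ((q^2) ^ i)) ^ (q ^ (2*s - 1))"
      by (simp add: power_add power_mult[symmetric] power_mult_distrib)
    also have "\<dots> = inverse z ^ (q * q ^ (2*s - 1))" using i by (simp add: power_mult)
    also have "q * q ^ (2*s - 1) = (q^2) ^ s" using s0
      by (metis Suc_pred' mult_2 power_Suc power_mult zero_less_mult_pos2 zero_less_numeral add_gr_0 less_numeral_extra(1) mult_pos_pos)
    also have "inverse z ^ ((q^2) ^ s) = inverse z" using zs by (simp add: power_inverse)
    finally show ?thesis using s0 by (intro exI[of _ "2*i + (2*s - 1)"]) auto
  qed
  define pL :: "'a alg_closure poly" where "pL = monom 1 n - 1"
  have "coeff pL n = 1" using n0 unfolding pL_def by simp
  hence "pL \<noteq> 0" by auto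
  hence "finite {z. poly pL z = 0}" by (rule poly_roots_finite)
  moreover have "{z. poly pL z = 0} = Z"
    unfolding Z_def pL_def by (simp add: poly_monom)
  ultimately have finZ: "finite Z" by simp
  define e :: "'a alg_closure \<Rightarrow> nat" where "e = (\<lambda>z. SOME e. odd e \<and> z ^ (q ^ e) = inverse z)"
  have e: "odd (e z) \<and> z ^ (q ^ e z) = inverse z" if "z \<in> Z" for z
    unfolding e_def using someI_ex[OF step1[OF that]] .
  define E where "E = (\<Prod>z\<in>Z. e z)"
  have oddE: "odd E" unfolding E_def using finZ e by (simp add: even_prod_iff)
  have allZ: "z ^ (q ^ E + 1) = 1" if zZ: "z \<in> Z" for z
  proof -
    have "E = e z * (\<Prod>w\<in>Z - {z}. e w)" unfolding E_def using finZ zZ by (simp add: prod.remove)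
    moreover have "odd (\<Prod>w\<in>Z - {z}. e w)" using finZ e by (simp add: even_prod_iff)
    ultimately have "z ^ (q ^ E) = inverse z" using oddpow[of z q "e z"] e[OF zZ] by simp
    moreover have "z \<noteq> 0" using zZ n0 unfolding Z_def by (auto simp: zero_power)
    ultimately show ?thesis by simp
  qed
  define r where "r = (q ^ E + 1) mod n"
  have rZ: "z ^ r = 1" if "z \<in> Z" for z
  proof -
    have "z ^ n = 1" using that unfolding Z_def by simp
    hence "z ^ (q ^ E + 1) = z ^ r" unfolding r_def by (rule pow_cong) (simp add: cong_def)
    thus ?thesis using allZ[OF that] by simp
  qed
  have "r = 0"
  proof (rule ccontr)
    assume r0: "r \<noteq> 0"
    define pr :: "'a alg_closure poly" where "pr = monom 1 r - 1"
    have cr: "coeff pr r = 1" using r0 unfolding pr_def by simp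
    hence pr0: "pr \<noteq> 0" by auto
    have dpr: "degree pr \<le> r" unfolding pr_def
      by (metis degree_diff_le degree_monom_le degree_1 le_0_eq le_zero_eq zero_le)
    have "Z \<subseteq> {x. poly pr x = 0}" using rZ unfolding pr_def by (auto simp: poly_monom)
    hence "card Z \<le> card {x. poly pr x = 0}" using poly_roots_finite[OF pr0] by (rule card_mono[rotated])
    also have "\<dots> \<le> r" using card_poly_roots_bound[OF pr0] dpr by simp
    also have "r < n" unfolding r_def using n0 by simp
    finally have "card Z < n" .
    moreover have "n \<le> card Z" unfolding Z_def by (rule count_roots[OF n0 nd])
    ultimately show False by simp
  qed
  hence "n dvd q ^ E + 1" unfolding r_def by (simp add: dvd_eq_mod_eq_0)
  thus ?thesis using oddE by blast
qed


theorem theorem2p12: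
  fixes q n1 n2 :: nat
  assumes card: "card (UNIV :: 'a::{field,finite} set) = q ^ 2"
    and qpp: "\<exists>p k. prime p \<and> k > 0 \<and> q = p ^ k"
    and n1: "odd n1" "n1 > 0" "coprime n1 q"
    and n2: "odd n2" "n2 > 0" "coprime n2 q"
    and h1: "\<forall>f :: 'a poly. lead_coeff f = 1 \<and> irreducible f \<and> f dvd (monom 1 n1 - 1) \<longrightarrow> SCRIM q f"
    and h2: "\<forall>f :: 'a poly. lead_coeff f = 1 \<and> irreducible f \<and> f dvd (monom 1 n2 - 1) \<longrightarrow> SCRIM q f"
  shows "\<forall>f :: 'a poly. lead_coeff f = 1 \<and> irreducible f \<and> f dvd (monom 1 (n1 * n2) - 1) \<longrightarrow> SCRIM q f"
proof -
  obtain p k where pk: "prime p" "k > 0" "q = p ^ k" using qpp by blast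
  have "CHAR('a) dvd p ^ (2 * k)" using CHAR_dvd_CARD[where 'a='a] card pk(3)
    by (simp add: power_mult[symmetric] mult.commute)
  hence "CHAR('a) dvd p" using char_prime_finite[where 'a='a] prime_dvd_power by blast
  hence cp: "CHAR('a) = p" using char_prime_finite[where 'a='a] pk(1) by (simp add: primes_dvd_imp_eq)
  have qc: "q = CHAR('a) ^ k" using pk cp by simp
  have Qc: "q^2 = CHAR('a) ^ (2 * k)" using qc by (simp add: power_mult[symmetric] mult.commute)
  obtain a where a: "odd a" "n1 dvd q ^ a + 1" using hard_direction[OF card qc pk(2) n1(2) n1(3) h1] by blast
  obtain b where b: "odd b" "n2 dvd q ^ b + 1" using hard_direction[OF card qc pk(2) n2(2) n2(3) h2] by blast
  obtain E where E: "odd E" "n1 * n2 dvd q ^ E + 1" using combine[OF n1(1) n2(1) a(1) b(1) a(2) b(2)] by blast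
  define N where "N = n1 * n2"
  have N0: "N > 0" using n1 n2 unfolding N_def by simp
  have copN: "coprime N q" using n1(3) n2(3) unfolding N_def by simp
  show ?thesis
  proof (intro allI impI)
    fix f :: "'a poly"
    assume f: "lead_coeff f = 1 \<and> irreducible f \<and> f dvd (monom 1 (n1 * n2) - 1)"
    hence lf: "lead_coeff f = 1" and irr: "irreducible f" and fd: "f dvd monom 1 N - 1"
      unfolding N_def by auto
    have c0: "coeff f 0 \<noteq> 0"
    proof
      assume "coeff f 0 = 0"
      hence "poly f 0 = 0" by (simp add: poly_0_coeff_0)
      hence "poly (monom 1 N - 1 :: 'a poly) 0 = 0" by (rule dvd_root[OF fd])
      thus False using N0 by (simp add: poly_monom zero_power)
    qed
    have "\<not> is_unit f" using irr by (rule irreducible_not_unit)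
    moreover have f0: "f \<noteq> 0" using irr by (simp add: Factorial_Ring.irreducible_def)
    ultimately have "degree f > 0" using is_unit_iff_degree[OF f0] by simp
    then obtain \<alpha> where ra: "poly (P f) \<alpha> = 0" using alg_closed_imp_poly_has_root[of "P f"] by auto
    have "P f dvd P (monom 1 N - 1)" using fd by (rule P_dvd)
    hence "poly (P (monom 1 N - 1)) \<alpha> = 0" using ra by (rule dvd_root)
    hence aN: "\<alpha> ^ N = 1" by (simp add: P_diff P_monom poly_monom)
    have a0: "\<alpha> \<noteq> 0" using aN N0 by (auto simp: zero_power)
    have "\<alpha> ^ (q ^ E + 1) = \<alpha> ^ 0"
      by (rule pow_cong[OF aN]) (use E(2) in \<open>simp add: N_def cong_def dvd_eq_mod_eq_0\<close>)
    hence aE: "\<alpha> ^ (q ^ E) = inverse \<alpha>" using a0 by (simp add: field_simps)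
    define s where "s = totient N"
    have s0: "s > 0" using N0 unfolding s_def by simp
    have as: "\<alpha> ^ ((q^2) ^ s) = \<alpha>" unfolding s_def by (rule roots_unity_frob[OF aN copN])
    have ev: "even (E + (2*s - 1))" using E(1) s0 by presburger
    obtain t where t: "E + (2*s - 1) = 2 * t" using ev by (elim evenE) simp
    define \<gamma> where "\<gamma> = \<alpha> ^ (q ^ (E + (2*s - 1)))"
    have g1: "\<gamma> = \<alpha> ^ ((q^2) ^ t)" unfolding \<gamma>_def t by (simp add: power_mult)
    have rg: "poly (P f) \<gamma> = 0" unfolding g1 by (rule root_closure[OF card Qc ra])
    have g2: "\<gamma> = inverse \<alpha> ^ (q ^ (2*s - 1))" unfolding \<gamma>_def
      by (simp add: power_add power_mult aE)
    have g0: "\<gamma> \<noteq> 0" using a0 g2 by simp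
    have "inverse \<gamma> ^ q = \<alpha> ^ (q ^ (2*s - 1) * q)" unfolding g2 by (simp add: power_inverse power_mult)
    also have "q ^ (2*s - 1) * q = (q^2) ^ s" using s0
      by (metis Suc_pred' mult_2 power_Suc power_mult mult.commute zero_less_mult_pos2 zero_less_numeral add_gr_0 less_numeral_extra(1) mult_pos_pos)
    finally have ig: "inverse \<gamma> ^ q = \<alpha>" using as by simp
    have "poly (P (dagger_poly q f)) (inverse \<gamma> ^ q) = 0"
      by (rule dagger_root[OF qc rg g0 c0])
    hence "poly (P (dagger_poly q f)) \<alpha> = 0" using ig by simp
    hence dv: "f dvd dagger_poly q f" by (rule root_dvd[OF irr ra])
    have q0: "q > 0" using qc char_prime_finite[where 'a='a] by (simp add: prime_gt_0_nat)
    have "f = dagger_poly q f"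
      using dagger_monic[OF lf c0 q0] lf dv by (intro monic_dvd_eq) auto
    thus "SCRIM q f" unfolding SCRIM_def using lf irr c0 by simp
  qed
qed

end
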